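(* Consider the D2EAL algorithm (without periodic reset) described in the context, run for a horizon $T\ge1$ with learning parameters $\eta_\alpha>0,\eta_w>0$ on an arbitrary target sequence and arbitrary expert predictions, and fix an agent $i\in[N]$. Assume (Assumption 1) that $\Omega_i(t)\subseteq\Omega_i(t-1)$ for all $t=1,\dots,T$ (hence $\Lambda_i(t)\subseteq\Lambda_i(t-1)$). Then $$R_i^S(T):=\hat L_{T,i}-\min_{j\in\Lambda_i(T)}\bar L_{T,j}\le\frac{\eta_wT}{8}+\frac{\log d_i(0)}{\eta_w}.$$
   Context: Setup. There are $N\ge 1$ agents indexed by $i\in[N]$ and a horizon $T\ge1$. The outcome space $\mathcal Y$ and action space $\mathcal A$ are convex subsets of $\mathbb R^n$. The loss $l:\mathcal A\times\mathcal Y\to[0,1]$ is convex in its first argument. The target sequence $y_1,\dots,y_T\in\mathcal Y$ is arbitrary. For each agent $i$ and each $t\ge1$, an "expert" supplies an arbitrary prediction $f_{t,i}\in\mathcal A$ of $y_t$ (available at time $t-1$). Agents communicate over a time-varying undirected graph; $\Omega_i(t)$ is the set of neighbours of agent $i$ at time $t$, $\Lambda_i(t):=\Omega_i(t)\cup\{i\}$ and $d_i(t):=|\Lambda_i(t)|$. D2EAL (without periodic reset). Initialize $\hat f_{0,i}=f_{1,i}$, $\hat\alpha_i(0)=\hat\alpha'_i(0)=\hat w_{ii}(0)=1$ for all $i$. For $t=0,1,\dots,T-1$, each agent $i$ computes: $\alpha_i(t)=\hat\alpha_i(t)/(\hat\alpha_i(t)+\hat\alpha'_i(t))$; individual prediction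 $\bar f_{t+1,i}=\alpha_i(t)f_{t+1,i}+(1-\alpha_i(t))\hat f_{t,i}$; social weights $w_{ij}(t)=\hat w_{jj}(t)/\sum_{j'\in\Lambda_i(t)}\hat w_{j'j'}(t)$ for $j\in\Lambda_i(t)$ and $w_{ij}(t)=0$ otherwise; social prediction $\hat f_{t+1,i}=\sum_{j\in\Lambda_i(t)}w_{ij}(t)\bar f_{t+1,j}$. After $y_{t+1}$ is revealed, define the losses $l_{t+1,i}=l(f_{t+1,i},y_{t+1})$, $\hat l^-_{t+1,i}=l(\hat f_{t,i},y_{t+1})$, $\bar l_{t+1,i}=l(\bar f_{t+1,i},y_{t+1})$, $\hat l_{t+1,i}=l(\hat f_{t+1,i},y_{t+1})$, and update $\hat\alpha_i(t+1)=\hat\alpha_i(t)e^{-\eta_\alpha l_{t+1,i}}$, $\hat\alpha'_i(t+1)=\hat\alpha'_i(t)e^{-\eta_\alpha \hat l^-_{t+1,i}}$, $\hat w_{ii}(t+1)=\hat w_{ii}(t)e^{-\eta_w\bar l_{t+1,i}}$. Cumulative losses: $L_{T,i}=\sum_{t=1}^T l_{t,i}$, $\hat L^-_{T,i}=\sum_{t=1}^T\hat l^-_{t,i}$, $\bar L_{T,i}=\sum_{t=1}^T\bar l_{t,i}$, $\hat L_{T,i}=\sum_{t=1}^T\hat l_{t,i}$. *)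

theory Defs
  imports "HOL-Analysis.Analysis"
begin

text \<open>Agents are natural numbers (agent i in [N] is i < N).
  Om t j is the neighbour set Omega_j(t); Lam Om t j = Lambda_j(t) = Omega_j(t) \<union> {j}.
  f t j is the expert prediction f_{t,j}; y t is the target y_t; l is the loss.
  The state at time t is (hat alpha(t), hat alpha'(t), hat w_jj(t), hat f_{t,.}).\<close>

definition Lam :: "(nat \<Rightarrow> nat \<Rightarrow> nat set) \<Rightarrow> nat \<Rightarrow> nat \<Rightarrow> nat set" where
  "Lam Om t j = insert j (Om t j)"

primrec d2eal_state ::
  "real \<Rightarrow> real \<Rightarrow> ('a::real_vector \<Rightarrow> 'b \<Rightarrow> real) \<Rightarrow> (nat \<Rightarrow> nat \<Rightarrow> 'a) \<Rightarrow> (nat \<Rightarrow> 'b)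
   \<Rightarrow> (nat \<Rightarrow> nat \<Rightarrow> nat set) \<Rightarrow> nat
   \<Rightarrow> (nat \<Rightarrow> real) \<times> (nat \<Rightarrow> real) \<times> (nat \<Rightarrow> real) \<times> (nat \<Rightarrow> 'a)" where
  "d2eal_state ea ew l f y Om 0 = ((\<lambda>i. 1), (\<lambda>i. 1), (\<lambda>i. 1), (\<lambda>i. f 1 i))"
| "d2eal_state ea ew l f y Om (Suc t) =
    (case d2eal_state ea ew l f y Om t of (ha, ha', hw, hf) \<Rightarrow>
      let alpha = (\<lambda>i. ha i / (ha i + ha' i));
          fbar = (\<lambda>i. alpha i *\<^sub>R f (Suc t) i + (1 - alpha i) *\<^sub>R hf i);
          wgt = (\<lambda>i j. if j \<in> Lam Om t i then hw j / (\<Sum>j'\<in>Lam Om t i. hw j') else 0);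
          hf' = (\<lambda>i. \<Sum>j\<in>Lam Om t i. wgt i j *\<^sub>R fbar j)
      in ((\<lambda>i. ha i * exp (- ea * l (f (Suc t) i) (y (Suc t)))),
          (\<lambda>i. ha' i * exp (- ea * l (hf i) (y (Suc t)))),
          (\<lambda>i. hw i * exp (- ew * l (fbar i) (y (Suc t)))),
          hf'))"

definition d2eal_alpha where
  "d2eal_alpha ea ew l f y Om t i =
     (case d2eal_state ea ew l f y Om t of (ha, ha', hw, hf) \<Rightarrow> ha i / (ha i + ha' i))"

definition d2eal_hatf where
  "d2eal_hatf ea ew l f y Om t i =
     (case d2eal_state ea ew l f y Om t of (ha, ha', hw, hf) \<Rightarrow> hf i)"

text \<open>d2eal_barf ... t i is bar f_{t+1,i} (computed at time t).\<close>
definition d2eal_barf where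
  "d2eal_barf ea ew l f y Om t i =
     d2eal_alpha ea ew l f y Om t i *\<^sub>R f (Suc t) i
     + (1 - d2eal_alpha ea ew l f y Om t i) *\<^sub>R d2eal_hatf ea ew l f y Om t i"

definition hatL where
  "hatL ea ew l f y Om T i = (\<Sum>t=1..T. l (d2eal_hatf ea ew l f y Om t i) (y t))"

definition barL where
  "barL ea ew l f y Om T i = (\<Sum>t=1..T. l (d2eal_barf ea ew l f y Om (t - 1) i) (y t))"

end

theory Submission imports Defs "HOL-Probability.Hoeffding" begin

lemma hoeff_fin:
  fixes m e :: real
  assumes "0 \<le> m" "m \<le> 1" "0 \<le> e"
  shows "1 - m + m * exp (- e) \<le> exp (- e * m + e\<^sup>2 / 8)"
proof -
  have aux: "- e * (1 - m) + ln (1 + (1 - m) * (exp e - 1)) \<le> e\<^sup>2 / 8"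
    using Hoeffdings_lemma_aux[of e "1 - m"] assms by simp
  have pos: "1 + (1 - m) * (exp e - 1) > 0"
    using assms by (intro add_pos_nonneg mult_nonneg_nonneg) auto
  have eq: "1 - m + m * exp (- e) = exp (- e) * (1 + (1 - m) * (exp e - 1))"
    by (simp add: algebra_simps exp_minus field_simps)
  have "1 - m + m * exp (- e) = exp (- e + ln (1 + (1 - m) * (exp e - 1)))"
    using pos eq by (simp add: exp_diff exp_minus field_simps)
  also have "\<dots> \<le> exp (- e * m + e\<^sup>2 / 8)"
    using aux by (simp add: algebra_simps)
  finally show ?thesis .
qed

lemma hoeff_sum:
  fixes p x :: "nat \<Rightarrow> real" and e :: real
  assumes "finite S" "\<And>j. j \<in> S \<Longrightarrow> 0 \<le> p j" "(\<Sum>j\<in>S. p j) = 1"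
    "\<And>j. j \<in> S \<Longrightarrow> 0 \<le> x j \<and> x j \<le> 1" "0 \<le> e"
  shows "(\<Sum>j\<in>S. p j * exp (- e * x j)) \<le> exp (- e * (\<Sum>j\<in>S. p j * x j) + e\<^sup>2 / 8)"
proof -
  have c: "exp (- e * x j) \<le> (1 - x j) + x j * exp (- e)" if "j \<in> S" for j
  proof -
    have "exp (e * ((1 - x j) *\<^sub>R 0 + x j *\<^sub>R (-1))) \<le> (1 - x j) * exp (e * 0) + x j * exp (e * (-1))"
      using convex_onD[OF convex_on_exp[OF assms(5)], of "x j" 0 "-1"] assms(4)[OF that] by auto
    then show ?thesis by simp
  qed
  have "(\<Sum>j\<in>S. p j * exp (- e * x j)) \<le> (\<Sum>j\<in>S. p j * ((1 - x j) + x j * exp (- e)))"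
    by (intro sum_mono mult_left_mono c assms(2))
  also have "\<dots> = 1 - (\<Sum>j\<in>S. p j * x j) + (\<Sum>j\<in>S. p j * x j) * exp (- e)"
    using assms(3) by (simp add: algebra_simps sum.distrib sum_subtractf sum_distrib_right sum_distrib_left)
  also have "\<dots> \<le> exp (- e * (\<Sum>j\<in>S. p j * x j) + e\<^sup>2 / 8)"
  proof (rule hoeff_fin)
    show "0 \<le> (\<Sum>j\<in>S. p j * x j)" using assms by (intro sum_nonneg) auto
    have "(\<Sum>j\<in>S. p j * x j) \<le> (\<Sum>j\<in>S. p j)"
      using assms by (intro sum_mono) (simp add: mult_left_le)
    then show "(\<Sum>j\<in>S. p j * x j) \<le> 1" using assms by simp
  qed (use assms in auto)
  finally show ?thesis .
qed

definition "HA ea ew l f y Om t = fst (d2eal_state ea ew l f y Om t)"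
definition "HA' ea ew l f y Om t = fst (snd (d2eal_state ea ew l f y Om t))"
definition "HW ea ew l f y Om t = fst (snd (snd (d2eal_state ea ew l f y Om t)))"

lemma HA_0: "HA ea ew l f y Om 0 j = 1" by (simp add: HA_def)
lemma HA'_0: "HA' ea ew l f y Om 0 j = 1" by (simp add: HA'_def)
lemma HW_0: "HW ea ew l f y Om 0 j = 1" by (simp add: HW_def)
lemma hatf_0: "d2eal_hatf ea ew l f y Om 0 j = f 1 j" by (simp add: d2eal_hatf_def)

lemma alpha_eq: "d2eal_alpha ea ew l f y Om t j = HA ea ew l f y Om t j / (HA ea ew l f y Om t j + HA' ea ew l f y Om t j)"
  by (cases "d2eal_state ea ew l f y Om t") (auto simp: d2eal_alpha_def HA_def HA'_def)

lemma HA_Suc: "HA ea ew l f y Om (Suc t) j = HA ea ew l f y Om t j * exp (- ea * l (f (Suc t) j) (y (Suc t)))"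
  by (cases "d2eal_state ea ew l f y Om t") (auto simp: HA_def Let_def)

lemma HA'_Suc: "HA' ea ew l f y Om (Suc t) j = HA' ea ew l f y Om t j * exp (- ea * l (d2eal_hatf ea ew l f y Om t j) (y (Suc t)))"
  by (cases "d2eal_state ea ew l f y Om t") (auto simp: HA'_def d2eal_hatf_def Let_def)

lemma HW_Suc: "HW ea ew l f y Om (Suc t) j = HW ea ew l f y Om t j * exp (- ew * l (d2eal_barf ea ew l f y Om t j) (y (Suc t)))"
  by (cases "d2eal_state ea ew l f y Om t") (auto simp: HW_def d2eal_hatf_def d2eal_barf_def d2eal_alpha_def Let_def)

lemma hatf_Suc: "d2eal_hatf ea ew l f y Om (Suc t) j =
   (\<Sum>k\<in>Lam Om t j. (HW ea ew l f y Om t k / (\<Sum>k'\<in>Lam Om t j. HW ea ew l f y Om t k')) *\<^sub>R d2eal_barf ea ew l f y Om t k)"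
  by (cases "d2eal_state ea ew l f y Om t") (auto simp: HW_def d2eal_hatf_def d2eal_barf_def d2eal_alpha_def Let_def intro!: sum.cong)

theorem lemma2:
  fixes N T i :: nat
    and eta_a eta_w :: real
    and A Y :: "(real ^ 'n) set"
    and l :: "real ^ 'n \<Rightarrow> real ^ 'n \<Rightarrow> real"
    and f :: "nat \<Rightarrow> nat \<Rightarrow> real ^ 'n"
    and y :: "nat \<Rightarrow> real ^ 'n"
    and Om :: "nat \<Rightarrow> nat \<Rightarrow> nat set"
  assumes "convex A" and "convex Y"
    and loss_range: "\<And>a b. a \<in> A \<Longrightarrow> b \<in> Y \<Longrightarrow> 0 \<le> l a b \<and> l a b \<le> 1"
    and loss_convex: "\<And>b. b \<in> Y \<Longrightarrow> convex_on A (\<lambda>a. l a b)"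
    and targets: "\<And>t. y t \<in> Y"
    and experts: "\<And>t j. 1 \<le> t \<Longrightarrow> j < N \<Longrightarrow> f t j \<in> A"
    and graph_sub: "\<And>t j. j < N \<Longrightarrow> Om t j \<subseteq> {..<N}"
    and graph_irrefl: "\<And>t j. j \<notin> Om t j"
    and graph_sym: "\<And>t j k. j < N \<Longrightarrow> k < N \<Longrightarrow> k \<in> Om t j \<longleftrightarrow> j \<in> Om t k"
    and "1 \<le> T" and "eta_a > 0" and "eta_w > 0"
    and "i < N"
    and assumption1: "\<And>t. 1 \<le> t \<Longrightarrow> t \<le> T \<Longrightarrow> Om t i \<subseteq> Om (t - 1) i"
  shows "hatL eta_a eta_w l f y Om T i
           - Min ((\<lambda>j. barL eta_a eta_w l f y Om T j) ` Lam Om T i)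
         \<le> eta_w * real T / 8 + ln (real (card (Lam Om 0 i))) / eta_w"
proof -
  define Ha where "Ha = HA eta_a eta_w l f y Om"
  define Ha' where "Ha' = HA' eta_a eta_w l f y Om"
  define H where "H = HW eta_a eta_w l f y Om"
  define hf where "hf = d2eal_hatf eta_a eta_w l f y Om"
  define bf where "bf = d2eal_barf eta_a eta_w l f y Om"
  define al where "al = d2eal_alpha eta_a eta_w l f y Om"
  note defs = Ha_def Ha'_def H_def hf_def bf_def al_def
  have Ha0: "Ha 0 j = 1" for j by (simp add: defs HA_0)
  have Ha'0: "Ha' 0 j = 1" for j by (simp add: defs HA'_0)
  have H0: "H 0 j = 1" for j by (simp add: defs HW_0)
  have hf0: "hf 0 j = f 1 j" for j by (simp add: defs hatf_0)
  have HaS: "Ha (Suc t) j = Ha t j * exp (- eta_a * l (f (Suc t) j) (y (Suc t)))" for t j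
    by (simp add: defs HA_Suc)
  have Ha'S: "Ha' (Suc t) j = Ha' t j * exp (- eta_a * l (hf t j) (y (Suc t)))" for t j
    by (simp add: defs HA'_Suc)
  have HS: "H (Suc t) j = H t j * exp (- eta_w * l (bf t j) (y (Suc t)))" for t j
    by (simp add: defs HW_Suc)
  have hfS: "hf (Suc t) j = (\<Sum>k\<in>Lam Om t j. (H t k / (\<Sum>k'\<in>Lam Om t j. H t k')) *\<^sub>R bf t k)" for t j
    by (simp add: defs hatf_Suc)
  have bf_eq: "bf t j = al t j *\<^sub>R f (Suc t) j + (1 - al t j) *\<^sub>R hf t j" for t j
    by (simp add: defs d2eal_barf_def)
  have al_eq: "al t j = Ha t j / (Ha t j + Ha' t j)" for t j
    by (simp add: defs alpha_eq)
  have Lsub: "Lam Om t j \<subseteq> {..<N}" if "j < N" for t j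
    using graph_sub[OF that] that by (auto simp: Lam_def)
  have Lfin: "finite (Lam Om t j)" if "j < N" for t j
    using Lsub[OF that] finite_subset by blast
  have Lmem: "j \<in> Lam Om t j" for t j by (simp add: Lam_def)
  have bfA: "bf t j \<in> A" if "j < N" "0 < Ha t j" "0 < Ha' t j" "hf t j \<in> A" for t j
  proof -
    have "0 \<le> al t j" "al t j \<le> 1" using that by (auto simp: al_eq)
    then show ?thesis unfolding bf_eq
      by (intro convexD[OF \<open>convex A\<close>] experts that) auto
  qed
  have inv: "\<forall>j<N. 0 < Ha t j \<and> 0 < Ha' t j \<and> 0 < H t j \<and> hf t j \<in> A" for t
  proof (induction t)
    case 0 then show ?case using experts by (simp add: Ha0 Ha'0 H0 hf0)
  next
    case (Suc t)
    show ?case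
    proof (intro allI impI conjI)
      fix j assume j: "j < N"
      show "0 < Ha (Suc t) j" "0 < Ha' (Suc t) j" "0 < H (Suc t) j"
        using Suc j by (simp_all add: HaS Ha'S HS)
      have pos: "0 < H t k" if "k \<in> Lam Om t j" for k using Suc Lsub[OF j] that by auto
      have Spos: "0 < (\<Sum>k'\<in>Lam Om t j. H t k')"
        using Lfin[OF j] Lmem pos by (intro sum_pos2[where i=j]) (auto intro: less_imp_le)
      show "hf (Suc t) j \<in> A" unfolding hfS
      proof (rule convex_sum[OF Lfin[OF j] \<open>convex A\<close>])
        show "(\<Sum>k\<in>Lam Om t j. H t k / (\<Sum>k'\<in>Lam Om t j. H t k')) = 1"
          using Spos by (simp add: sum_divide_distrib[symmetric])
        show "0 \<le> H t k / (\<Sum>k'\<in>Lam Om t j. H t k')" if "k \<in> Lam Om t j" for k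
          using pos[OF that] Spos by simp
        show "bf t k \<in> A" if "k \<in> Lam Om t j" for k
          using Suc Lsub[OF j] that by (intro bfA) auto
      qed
    qed
  qed
  have bfA': "bf t j \<in> A" if "j < N" for t j using inv[of t] that bfA by auto
  have Hpos: "0 < H t j" if "j < N" for t j using inv[of t] that by auto
  have lb: "0 \<le> l (bf t j) (y t') \<and> l (bf t j) (y t') \<le> 1" if "j < N" for t t' j
    using loss_range[OF bfA'[OF that] targets] .
  have barLS: "barL eta_a eta_w l f y Om (Suc t) j = barL eta_a eta_w l f y Om t j + l (bf t j) (y (Suc t))" for t j
    by (simp add: barL_def bf_def)
  have hatLS: "hatL eta_a eta_w l f y Om (Suc t) j = hatL eta_a eta_w l f y Om t j + l (hf (Suc t) j) (y (Suc t))" for t j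
    by (simp add: hatL_def hf_def)
  have Hexp: "H t j = exp (- eta_w * barL eta_a eta_w l f y Om t j)" for t j
  proof (induction t)
    case 0 then show ?case by (simp add: H0 barL_def)
  next
    case (Suc t) then show ?case by (simp add: HS barLS exp_add[symmetric] algebra_simps)
  qed
  define G where "G n = (\<Sum>k\<in>Lam Om n i. H n k)" for n
  define c where "c = real (card (Lam Om 0 i))"
  have step: "G (Suc n) \<le> G n * exp (- eta_w * l (hf (Suc n) i) (y (Suc n)) + eta_w\<^sup>2 / 8)"
    if "Suc n \<le> T" for n
  proof -
    let ?L = "Lam Om n i"
    have fin: "finite ?L" using Lfin[OF \<open>i < N\<close>] .
    have sub: "\<And>k. k \<in> ?L \<Longrightarrow> k < N" using Lsub[OF \<open>i < N\<close>] by auto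
    have Gpos: "0 < G n" unfolding G_def
      using fin Lmem Hpos sub by (intro sum_pos2[where i=i]) (auto intro: less_imp_le)
    define w where "w k = H n k / G n" for k
    define x where "x k = l (bf n k) (y (Suc n))" for k
    define m where "m = (\<Sum>k\<in>?L. w k * x k)"
    have wnn: "0 \<le> w k" if "k \<in> ?L" for k using Hpos[OF sub[OF that]] Gpos unfolding w_def by (meson divide_nonneg_pos less_imp_le)
    have wsum: "(\<Sum>k\<in>?L. w k) = 1" using Gpos by (simp add: w_def G_def sum_divide_distrib[symmetric])
    have hl: "l (hf (Suc n) i) (y (Suc n)) \<le> m"
    proof -
      have "hf (Suc n) i = (\<Sum>k\<in>?L. w k *\<^sub>R bf n k)" by (simp add: hfS w_def G_def)
      moreover have "l (\<Sum>k\<in>?L. w k *\<^sub>R bf n k) (y (Suc n)) \<le> (\<Sum>k\<in>?L. w k * l (bf n k) (y (Suc n)))"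
        using convex_on_sum[OF fin _ loss_convex[OF targets] wsum wnn, of "\<lambda>k. bf n k"] Lmem bfA' sub
        by blast
      ultimately show ?thesis by (simp add: m_def x_def)
    qed
    have "G (Suc n) \<le> (\<Sum>k\<in>?L. H (Suc n) k)" unfolding G_def
    proof (rule sum_mono2[OF fin])
      show "Lam Om (Suc n) i \<subseteq> ?L" using assumption1[of "Suc n"] that by (auto simp: Lam_def)
      show "0 \<le> H (Suc n) k" if "k \<in> ?L - Lam Om (Suc n) i" for k using Hpos sub that
        by (meson DiffD1 less_imp_le)
    qed
    also have "\<dots> = G n * (\<Sum>k\<in>?L. w k * exp (- eta_w * x k))"
      using Gpos by (simp add: HS w_def x_def sum_distrib_left G_def)
    also have "\<dots> \<le> G n * exp (- eta_w * m + eta_w\<^sup>2 / 8)"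
      unfolding m_def using Gpos lb sub wnn wsum fin \<open>eta_w > 0\<close>
      by (intro mult_left_mono hoeff_sum) (auto simp: x_def)
    also have "\<dots> \<le> G n * exp (- eta_w * l (hf (Suc n) i) (y (Suc n)) + eta_w\<^sup>2 / 8)"
      using Gpos hl \<open>eta_w > 0\<close> by (intro mult_left_mono) auto
    finally show ?thesis .
  qed
  have bound: "G n \<le> c * exp (- eta_w * hatL eta_a eta_w l f y Om n i + real n * eta_w\<^sup>2 / 8)"
    if "n \<le> T" for n
    using that
  proof (induction n)
    case 0 then show ?case by (simp add: G_def H0 c_def hatL_def)
  next
    case (Suc n)
    have "G (Suc n) \<le> G n * exp (- eta_w * l (hf (Suc n) i) (y (Suc n)) + eta_w\<^sup>2 / 8)"
      using step Suc by simp
    also have "\<dots> \<le> c * exp (- eta_w * hatL eta_a eta_w l f y Om n i + real n * eta_w\<^sup>2 / 8)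
                    * exp (- eta_w * l (hf (Suc n) i) (y (Suc n)) + eta_w\<^sup>2 / 8)"
      using Suc by (intro mult_right_mono) auto
    also have "\<dots> = c * exp (- eta_w * hatL eta_a eta_w l f y Om (Suc n) i + real (Suc n) * eta_w\<^sup>2 / 8)"
      by (simp add: hatLS mult.assoc exp_add[symmetric] algebra_simps)
    finally show ?case .
  qed
  have cpos: "0 < c" unfolding c_def using Lfin[OF \<open>i < N\<close>] Lmem
    by (simp add: card_gt_0_iff) blast
  let ?S = "(\<lambda>j. barL eta_a eta_w l f y Om T j) ` Lam Om T i"
  have "Min ?S \<in> ?S" using Lfin[OF \<open>i < N\<close>] Lmem by (intro Min_in) auto
  then obtain j where j: "j \<in> Lam Om T i" and jm: "Min ?S = barL eta_a eta_w l f y Om T j" by auto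
  have "exp (- eta_w * barL eta_a eta_w l f y Om T j) \<le> G T"
    unfolding G_def Hexp[symmetric]
    using Lfin[OF \<open>i < N\<close>] j Hpos Lsub[OF \<open>i < N\<close>]
    by (intro member_le_sum) (auto intro: less_imp_le simp: subset_iff)
  also have "\<dots> \<le> c * exp (- eta_w * hatL eta_a eta_w l f y Om T i + real T * eta_w\<^sup>2 / 8)"
    using bound by simp
  also have "\<dots> = exp (ln c + (- eta_w * hatL eta_a eta_w l f y Om T i + real T * eta_w\<^sup>2 / 8))"
    using cpos by (simp add: exp_add)
  finally have "- eta_w * barL eta_a eta_w l f y Om T j \<le> ln c + (- eta_w * hatL eta_a eta_w l f y Om T i + real T * eta_w\<^sup>2 / 8)"
    by simp
  then have "eta_w * (hatL eta_a eta_w l f y Om T i - barL eta_a eta_w l f y Om T j)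
      \<le> eta_w * (eta_w * real T / 8 + ln c / eta_w)"
    using \<open>eta_w > 0\<close> by (simp add: algebra_simps power2_eq_square)
  then have "hatL eta_a eta_w l f y Om T i - barL eta_a eta_w l f y Om T j \<le> eta_w * real T / 8 + ln c / eta_w"
    using \<open>eta_w > 0\<close> by (simp add: mult_le_cancel_left_pos)
  then show ?thesis by (simp add: jm c_def)
qed

end
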